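(* Let $\boldsymbol\Phi':=\mathbf wx_N$ (apply $\mathbf w$, then multiply by $x_N$). Then $\boldsymbol\Phi'=s^{N-1}\Xi_1\boldsymbol\Phi$, and for every $v\in\mathbb N_0^N$ and $\mathbb T\in\mathrm{Tab}_\lambda$, $$P_{v,\mathbb T}\boldsymbol\Phi'=s^{N-1+\mathrm{CT}_{\mathbb T}[r_v[1]]}q^{v_1}P_{v,\mathbb T}\boldsymbol\Phi .$$
   Context: $N\ge2$, $q,s$ indeterminates, $K=\mathbb C(q,s)$. Operators act on the right, composed left to right. $\mathcal H_N(s)$ is generated by $T_1,\dots,T_{N-1}$ with $(T_i+1)(T_i-s)=0$ and braid relations. $\lambda$ a partition of $N$ (French convention, rows numbered bottom to top); $\mathrm{Tab}_\lambda$ = reverse standard tableaux (bijective fillings by $1,\dots,N$ strictly decreasing left to right in rows and bottom to top in columns); $\mathrm{CT}_{\mathbb T}[i]$ = column minus row of the cell of $i$; $\mathbb T^{(i,j)}$ exchanges $i,j$. $V_\lambda$ has basis $\mathrm{Tab}_\lambda$, right action $\mathbb TT_i=s\mathbb T$ if $i,i+1$ share a row, $-\mathbb T$ if they share a column, and if $i$ is in a higher row than $i+1$, with $m=\mathrm{CT}_{\mathbb T}[i+1]-\mathrm{CT}_{\mathbb T}[i]>0$, $\mathbb TT_i=\frac{s-1}{1-s^m}\mathbb T+\frac{s(1-s^{m+1})(1-s^{m-1})}{(1-s^m)^2}\mathbb T^{(i,i+1)}$; remaining case determined by this formula for $\mathbb T^{(i,i+1)}$ and the quadratic relation. $\mathcal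 M_\lambda=K[x_1,\dots,x_N]\otimes V_\lambda$; $(p\otimes u)\mathbf T_i=(1-s)\frac{x_{i+1}(p-p^{s_i})}{x_i-x_{i+1}}\otimes u+p^{s_i}\otimes uT_i$ ($p^{s_i}$: $x_i,x_{i+1}$ exchanged), $(p\otimes u)\mathbf w=p(qx_N,x_1,\dots,x_{N-1})\otimes uT_1\cdots T_{N-1}$, $\mathbf T_i^{-1}=s^{-1}(\mathbf T_i+1-s)$, $\Xi_i=s^{i-N}\mathbf T_{i-1}^{-1}\cdots\mathbf T_1^{-1}\mathbf w\mathbf T_{N-1}\cdots\mathbf T_i$, $\boldsymbol\Phi=\mathbf T_1^{-1}\cdots\mathbf T_{N-1}^{-1}x_N$. For $v\in\mathbb N_0^N$, $r_v[i]=\#\{j\le i:v_j\ge v_i\}+\#\{j>i:v_j>v_i\}$. $P_{v,\mathbb T}$ denotes the vector-valued nonsymmetric Macdonald polynomial: the simultaneous eigenfunction of the $\Xi_i$ in $\mathcal M_\lambda$ with $P_{v,\mathbb T}\Xi_i=q^{v_i}s^{\mathrm{CT}_{\mathbb T}[r_v[i]]}P_{v,\mathbb T}$ for all $i$. *)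

theory Defs
  imports "HOL-Library.Poly_Mapping" "HOL-Computational_Algebra.Polynomial"
          "HOL-Computational_Algebra.Fraction_Field" Complex_Main
begin

text \<open>K = fraction field of C[q][s]; the outer polynomial variable is s, the inner one is q.\<close>
type_synonym K = "complex poly poly fract"

definition qq :: K where "qq = Fract [:[:0, 1:]:] 1"
definition ss :: K where "ss = Fract [:0, 1:] 1"

type_synonym mpoly = "(nat \<Rightarrow>\<^sub>0 nat) \<Rightarrow>\<^sub>0 K"

definition mvar :: "nat \<Rightarrow> mpoly" where
  "mvar i = Poly_Mapping.single (Poly_Mapping.single i 1) 1"

definition mconst :: "K \<Rightarrow> mpoly" where
  "mconst c = Poly_Mapping.single 0 c"

definition poly_in_vars :: "nat \<Rightarrow> mpoly \<Rightarrow> bool" where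
  "poly_in_vars N p \<longleftrightarrow> (\<forall>m\<in>Poly_Mapping.keys p. Poly_Mapping.keys m \<subseteq> {1..N})"

definition mono_subst :: "((nat \<Rightarrow>\<^sub>0 nat) \<Rightarrow> (nat \<Rightarrow>\<^sub>0 nat)) \<Rightarrow> ((nat \<Rightarrow>\<^sub>0 nat) \<Rightarrow> K) \<Rightarrow> mpoly \<Rightarrow> mpoly" where
  "mono_subst f g p = (\<Sum>m\<in>Poly_Mapping.keys p. Poly_Mapping.single (f m) (Poly_Mapping.lookup p m * g m))"

definition swp :: "nat \<Rightarrow> nat \<Rightarrow> nat \<Rightarrow> nat" where
  "swp i j k = (if k = i then j else if k = j then i else k)"

definition swap_var :: "nat \<Rightarrow> mpoly \<Rightarrow> mpoly" where
  "swap_var i p = mono_subst (\<lambda>m. Abs_poly_mapping (\<lambda>k. Poly_Mapping.lookup m (swp i (Suc i) k))) (\<lambda>_. 1) p"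

text \<open>p(q x_N, x_1, ..., x_{N-1})\<close>
definition wshift :: "nat \<Rightarrow> mpoly \<Rightarrow> mpoly" where
  "wshift N p = mono_subst
     (\<lambda>m. Abs_poly_mapping (\<lambda>k. if 1 \<le> k \<and> k < N then Poly_Mapping.lookup m (Suc k)
                                else if k = N then Poly_Mapping.lookup m 1 else 0))
     (\<lambda>m. qq ^ Poly_Mapping.lookup m 1) p"

text \<open>x_{i+1} (p - p^{s_i}) / (x_i - x_{i+1}) (exact division)\<close>
definition ddiff :: "nat \<Rightarrow> mpoly \<Rightarrow> mpoly" where
  "ddiff i p = mvar (Suc i) * (THE r. (mvar i - mvar (Suc i)) * r = p - swap_var i p)"

definition is_partition :: "nat \<Rightarrow> nat list \<Rightarrow> bool" where
  "is_partition N lam \<longleftrightarrow> sorted_wrt (\<ge>) lam \<and> (\<forall>x\<in>set lam. 0 < x) \<and> sum_list lam = N"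

text \<open>cells (row, column), 0-indexed, row 0 = bottom row (of length lam!0)\<close>
definition cells :: "nat list \<Rightarrow> (nat \<times> nat) set" where
  "cells lam = {(r, c). r < length lam \<and> c < lam ! r}"

text \<open>a tableau records for each entry i in {1..N} its cell (row, column)\<close>
type_synonym tableau = "nat \<Rightarrow> nat \<times> nat"

definition tabs :: "nat \<Rightarrow> nat list \<Rightarrow> tableau set" where
  "tabs N lam = {t. bij_betw t {1..N} (cells lam)
      \<and> (\<forall>k. k \<notin> {1..N} \<longrightarrow> t k = (0, 0))
      \<and> (\<forall>i\<in>{1..N}. \<forall>j\<in>{1..N}. fst (t i) = fst (t j) \<and> snd (t i) < snd (t j) \<longrightarrow> j < i)
      \<and> (\<forall>i\<in>{1..N}. \<forall>j\<in>{1..N}. snd (t i) = snd (t j) \<and> fst (t i) < fst (t j) \<longrightarrow> j < i)}"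

definition CT :: "tableau \<Rightarrow> nat \<Rightarrow> int" where
  "CT t i = int (snd (t i)) - int (fst (t i))"

definition tswap :: "tableau \<Rightarrow> nat \<Rightarrow> nat \<Rightarrow> tableau" where
  "tswap t i j = t \<circ> swp i j"

type_synonym vec = "tableau \<Rightarrow> K"

definition delta :: "tableau \<Rightarrow> vec" where
  "delta t = (\<lambda>t'. if t' = t then 1 else 0)"

definition coef_a :: "int \<Rightarrow> K" where
  "coef_a m = (ss - 1) / (1 - ss powi m)"

definition coef_b :: "int \<Rightarrow> K" where
  "coef_b m = ss * (1 - ss powi (m + 1)) * (1 - ss powi (m - 1)) / (1 - ss powi m)^2"

text \<open>In the last case the coefficients are
  those forced by the formula for t' = t^{(i,i+1)} together with the quadratic relation:
  if t' T_i = a t' + b t then t T_i = ((s-1)a + s - a^2)/b t' + (s-1-a) t.\<close>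
definition hecke_img :: "tableau \<Rightarrow> nat \<Rightarrow> vec" where
  "hecke_img t i =
    (if fst (t i) = fst (t (Suc i)) then (\<lambda>t'. ss * delta t t')
     else if snd (t i) = snd (t (Suc i)) then (\<lambda>t'. - delta t t')
     else if fst (t i) > fst (t (Suc i)) then
       (let m = CT t (Suc i) - CT t i
        in (\<lambda>t'. coef_a m * delta t t' + coef_b m * delta (tswap t i (Suc i)) t'))
     else
       (let t2 = tswap t i (Suc i); m = CT t2 (Suc i) - CT t2 i;
            a = coef_a m; b = coef_b m
        in (\<lambda>t'. (ss - 1 - a) * delta t t' + (((ss - 1) * a + ss - a^2) / b) * delta t2 t')))"

definition vec_T :: "nat \<Rightarrow> nat list \<Rightarrow> nat \<Rightarrow> vec \<Rightarrow> vec" where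
  "vec_T N lam i u = (\<lambda>t'. \<Sum>t\<in>tabs N lam. u t * hecke_img t i t')"

text \<open>u T_1 T_2 ... T_{N-1} (right action, T_1 applied first)\<close>
definition vec_w :: "nat \<Rightarrow> nat list \<Rightarrow> vec \<Rightarrow> vec" where
  "vec_w N lam u = foldl (\<lambda>v i. vec_T N lam i v) u [1..<N]"

text \<open>an element is sum over tableaux t of f t (x) t\<close>
type_synonym melem = "tableau \<Rightarrow> mpoly"

definition Mcarrier :: "nat \<Rightarrow> nat list \<Rightarrow> melem set" where
  "Mcarrier N lam = {f. (\<forall>t. t \<notin> tabs N lam \<longrightarrow> f t = 0) \<and> (\<forall>t. poly_in_vars N (f t))}"

definition scal :: "K \<Rightarrow> melem \<Rightarrow> melem" where
  "scal c f = (\<lambda>t. mconst c * f t)"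

definition opT :: "nat \<Rightarrow> nat list \<Rightarrow> nat \<Rightarrow> melem \<Rightarrow> melem" where
  "opT N lam i f = (\<lambda>t'. mconst (1 - ss) * ddiff i (f t')
       + (\<Sum>t\<in>tabs N lam. mconst (hecke_img t i t') * swap_var i (f t)))"

definition opTinv :: "nat \<Rightarrow> nat list \<Rightarrow> nat \<Rightarrow> melem \<Rightarrow> melem" where
  "opTinv N lam i f = (\<lambda>t'. mconst (inverse ss) * (opT N lam i f t' + mconst (1 - ss) * f t'))"

definition opw :: "nat \<Rightarrow> nat list \<Rightarrow> melem \<Rightarrow> melem" where
  "opw N lam f = (\<lambda>t'. \<Sum>t\<in>tabs N lam. mconst (vec_w N lam (delta t) t') * wshift N (f t))"

definition opx :: "nat \<Rightarrow> melem \<Rightarrow> melem" where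
  "opx N f = (\<lambda>t'. mvar N * f t')"

text \<open>right action of a word of operators, composed left to right: f (A_1 A_2 ... A_n)\<close>
definition act :: "'m \<Rightarrow> ('m \<Rightarrow> 'm) list \<Rightarrow> 'm" where
  "act f ops = foldl (\<lambda>g A. A g) f ops"

definition Xi :: "nat \<Rightarrow> nat list \<Rightarrow> nat \<Rightarrow> melem \<Rightarrow> melem" where
  "Xi N lam i f = scal (ss powi (int i - int N))
     (act f (map (opTinv N lam) (rev [1..<i]) @ [opw N lam] @ map (opT N lam) (rev [i..<N])))"

definition Phi :: "nat \<Rightarrow> nat list \<Rightarrow> melem \<Rightarrow> melem" where
  "Phi N lam f = opx N (act f (map (opTinv N lam) [1..<N]))"

definition Phi' :: "nat \<Rightarrow> nat list \<Rightarrow> melem \<Rightarrow> melem" where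
  "Phi' N lam f = opx N (opw N lam f)"

definition rv :: "nat \<Rightarrow> (nat \<Rightarrow> nat) \<Rightarrow> nat \<Rightarrow> nat" where
  "rv N v i = card {j\<in>{1..i}. v j \<ge> v i} + card {j\<in>{Suc i..N}. v j > v i}"

end

theory Submission
  imports Defs
begin

lemma mpoly_idom_test: "(a::mpoly) * b = 0 \<Longrightarrow> a = 0 \<or> b = 0" by simp

lemma swp_swp[simp]: "swp i j (swp i j k) = k" by (simp add: swp_def)

definition msw :: "nat \<Rightarrow> (nat \<Rightarrow>\<^sub>0 nat) \<Rightarrow> (nat \<Rightarrow>\<^sub>0 nat)" where
  "msw i m = Abs_poly_mapping (\<lambda>k. Poly_Mapping.lookup m (swp i (Suc i) k))"

lemma finite_msw: "finite {k. Poly_Mapping.lookup m (swp i (Suc i) k) \<noteq> 0}"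
proof -
  have "{k. Poly_Mapping.lookup m (swp i (Suc i) k) \<noteq> 0} = swp i (Suc i) ` {k. Poly_Mapping.lookup m k \<noteq> 0}"
    by (auto simp: image_iff intro!: exI[of _ "swp i (Suc i) _"])
  thus ?thesis by simp
qed

lemma lookup_msw[simp]: "Poly_Mapping.lookup (msw i m) k = Poly_Mapping.lookup m (swp i (Suc i) k)"
  unfolding msw_def by (subst lookup_Abs_poly_mapping[OF finite_msw]) (rule refl)

lemma msw_msw[simp]: "msw i (msw i m) = m"
  by (rule poly_mapping_eqI) simp

lemma msw_eq_iff: "msw i a = b \<longleftrightarrow> a = msw i b"
  by (metis msw_msw)

lemma msw_add: "msw i (a + b) = msw i a + msw i b"
  by (rule poly_mapping_eqI) (simp add: lookup_add)

lemma msw_zero[simp]: "msw i 0 = 0"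
  by (rule poly_mapping_eqI) simp

lemma msw_single: "msw i (Poly_Mapping.single k n) = Poly_Mapping.single (swp i (Suc i) k) n"
  by (rule poly_mapping_eqI) (auto simp: lookup_single when_def swp_def)

lemma lookup_swap_var: "Poly_Mapping.lookup (swap_var i p) m = Poly_Mapping.lookup p (msw i m)"
proof -
  have "Poly_Mapping.lookup (swap_var i p) m =
     (\<Sum>m'\<in>Poly_Mapping.keys p. if m' = msw i m then Poly_Mapping.lookup p m' else 0)"
    unfolding swap_var_def mono_subst_def lookup_sum
    by (intro sum.cong) (auto simp: lookup_single when_def msw_def[symmetric] msw_eq_iff)
  also have "\<dots> = Poly_Mapping.lookup p (msw i m)"
    by (simp add: in_keys_iff)
  finally show ?thesis .
qed

lemma swap_add: "swap_var i (p + q) = swap_var i p + swap_var i q"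
  by (rule poly_mapping_eqI) (simp add: lookup_swap_var lookup_add)
lemma swap_zero[simp]: "swap_var i 0 = 0"
  by (rule poly_mapping_eqI) (simp add: lookup_swap_var)
lemma swap_minus: "swap_var i (p - q) = swap_var i p - swap_var i q"
  by (rule poly_mapping_eqI) (simp add: lookup_swap_var lookup_minus)
lemma swap_uminus: "swap_var i (- p) = - swap_var i p"
  by (rule poly_mapping_eqI) (simp add: lookup_swap_var)
lemma swap_swap[simp]: "swap_var i (swap_var i p) = p"
  by (rule poly_mapping_eqI) (simp add: lookup_swap_var)
lemma swap_single: "swap_var i (Poly_Mapping.single a c) = Poly_Mapping.single (msw i a) c"
  by (rule poly_mapping_eqI) (auto simp: lookup_swap_var lookup_single when_def msw_eq_iff)
lemma swap_sum: "swap_var i (sum f A) = (\<Sum>x\<in>A. swap_var i (f x))"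
  by (induction A rule: infinite_finite_induct) (auto simp: swap_add)

lemma update_as_add: "a \<notin> Poly_Mapping.keys f \<Longrightarrow> Poly_Mapping.update a b f = f + Poly_Mapping.single a b"
  by (rule poly_mapping_eqI) (auto simp: lookup_update lookup_add lookup_single when_def in_keys_iff)

lemma pm_induct[case_names zero add]:
  assumes "P 0" and "\<And>f a b. P f \<Longrightarrow> P (f + Poly_Mapping.single a b)"
  shows "P f"
  by (induction f rule: update_induct) (auto simp: update_as_add assms)

lemma swap_mult_single: "swap_var i (Poly_Mapping.single a c * q) = Poly_Mapping.single (msw i a) c * swap_var i q"
proof (induction q rule: pm_induct)
  case zero then show ?case by simp
next
  case (add f b d)
  then show ?case by (simp add: distrib_left swap_add mult_single swap_single msw_add)
qed

lemma swap_mult: "swap_var i (p * q) = swap_var i p * swap_var i q"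
proof (induction p rule: pm_induct)
  case zero then show ?case by simp
next
  case (add f a b)
  then show ?case by (simp add: distrib_right swap_add swap_mult_single swap_single)
qed

lemma swap_mconst[simp]: "swap_var i (mconst c) = mconst c"
  unfolding mconst_def by (simp add: swap_single)

lemma swap_mvar: "swap_var i (mvar k) = mvar (swp i (Suc i) k)"
  unfolding mvar_def by (simp add: swap_single msw_single)

lemma swap_mvar_i[simp]: "swap_var i (mvar i) = mvar (Suc i)"
  and swap_mvar_Si[simp]: "swap_var i (mvar (Suc i)) = mvar i"
  by (simp_all add: swap_mvar swp_def)

lemma mconst_mult: "mconst (a * b) = mconst a * mconst b"
  unfolding mconst_def by (simp add: mult_single)
lemma mconst_add: "mconst (a + b) = mconst a + mconst b"
  unfolding mconst_def by (simp add: single_add)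
lemma mconst_diff: "mconst (a - b) = mconst a - mconst b"
  unfolding mconst_def by (simp add: single_diff)
lemma mconst_1[simp]: "mconst 1 = 1"
  unfolding mconst_def by simp
lemma mconst_0[simp]: "mconst 0 = 0"
  unfolding mconst_def by simp

definition dd :: "nat \<Rightarrow> mpoly" where "dd i = mvar i - mvar (Suc i)"

lemma dd_nz: "dd i \<noteq> 0"
proof
  assume "dd i = 0"
  hence "Poly_Mapping.lookup (dd i) (Poly_Mapping.single i 1) = 0" by simp
  moreover have "Poly_Mapping.single i (1::nat) \<noteq> Poly_Mapping.single (Suc i) 1"
    by (metis lookup_single_eq lookup_single_not_eq n_not_Suc_n zero_neq_one)
  ultimately show False
    by (simp add: dd_def mvar_def lookup_minus lookup_single when_def)
qed

definition DP :: "nat \<Rightarrow> mpoly \<Rightarrow> bool" where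
  "DP i p \<longleftrightarrow> (\<exists>r. p - swap_var i p = dd i * r)"

lemma DP_add: "DP i p \<Longrightarrow> DP i q \<Longrightarrow> DP i (p + q)"
proof -
  assume "DP i p" "DP i q"
  then obtain r1 r2 where r: "p - swap_var i p = dd i * r1" "q - swap_var i q = dd i * r2"
    unfolding DP_def by blast
  have "p + q - swap_var i (p + q) = dd i * (r1 + r2)"
    using r by (simp add: swap_add algebra_simps)
  thus ?thesis unfolding DP_def by blast
qed

lemma DP_mult: "DP i p \<Longrightarrow> DP i q \<Longrightarrow> DP i (p * q)"
proof -
  assume "DP i p" "DP i q"
  then obtain r1 r2 where r: "p - swap_var i p = dd i * r1" "q - swap_var i q = dd i * r2"
    unfolding DP_def by blast
  have "p * q - swap_var i (p * q) = (p - swap_var i p) * q + swap_var i p * (q - swap_var i q)"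
    by (simp add: swap_mult algebra_simps)
  also have "\<dots> = dd i * (r1 * q + swap_var i p * r2)" by (simp add: r algebra_simps)
  finally show ?thesis unfolding DP_def by blast
qed

lemma DP_mconst: "DP i (mconst c)"
  unfolding DP_def by (auto intro: exI[of _ 0])

lemma DP_mvar: "DP i (mvar k)"
  unfolding DP_def swap_mvar dd_def
  by (cases "k = i"; cases "k = Suc i") (auto simp: swp_def intro: exI[of _ 1] exI[of _ "-1"])

lemma DP_power: "DP i p \<Longrightarrow> DP i (p ^ n)"
  by (induction n) (auto intro: DP_mult simp: DP_mconst[of i 1, simplified])

lemma single_single_power: "Poly_Mapping.single (Poly_Mapping.single a (n::nat)) (1::K) = mvar a ^ n"
proof (induction n)
  case 0 then show ?case by simp
next
  case (Suc n)
  have e: "Poly_Mapping.single a (Suc n) = Poly_Mapping.single a n + Poly_Mapping.single a 1"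
    by (simp add: single_add[symmetric])
  have "Poly_Mapping.single (Poly_Mapping.single a (Suc n)) (1::K)
     = Poly_Mapping.single (Poly_Mapping.single a n) 1 * Poly_Mapping.single (Poly_Mapping.single a 1) 1"
    unfolding e mult_single by simp
  also have "\<dots> = mvar a ^ n * mvar a" using Suc by (simp add: mvar_def)
  finally show ?case by (simp add: power_Suc2)
qed

lemma DP_mono: "DP i (Poly_Mapping.single m c)"
proof (induction m arbitrary: c rule: pm_induct)
  case zero then show ?case using DP_mconst[of i c] by (simp add: mconst_def)
next
  case (add f a b)
  have "Poly_Mapping.single (f + Poly_Mapping.single a b) c = Poly_Mapping.single f c * mvar a ^ b"
    by (simp add: single_single_power[symmetric] mult_single)
  then show ?case using add by (simp add: DP_mult DP_power DP_mvar)
qed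

lemma DP_all: "DP i p"
  by (induction p rule: pm_induct) (auto intro: DP_add DP_mono simp: DP_mconst[of i 0, simplified])

definition DQ :: "nat \<Rightarrow> mpoly \<Rightarrow> mpoly" where
  "DQ i p = (THE r. (mvar i - mvar (Suc i)) * r = p - swap_var i p)"

lemma DQ_ex1: "\<exists>!r. (mvar i - mvar (Suc i)) * r = p - swap_var i p"
proof -
  obtain r where "p - swap_var i p = dd i * r" using DP_all unfolding DP_def by blast
  moreover have "dd i * r1 = dd i * r2 \<Longrightarrow> r1 = r2" for r1 r2 using dd_nz by simp
  ultimately show ?thesis unfolding dd_def by metis
qed

lemma DQ_eq: "dd i * DQ i p = p - swap_var i p"
  unfolding DQ_def dd_def by (rule theI'[OF DQ_ex1])

lemma DQ_unique: "dd i * r = p - swap_var i p \<Longrightarrow> DQ i p = r"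
  using DQ_eq[of i p] dd_nz[of i] by (metis mult_left_cancel)

lemma ddiff_DQ: "ddiff i p = mvar (Suc i) * DQ i p"
  unfolding ddiff_def DQ_def ..

lemma DQ_add: "DQ i (p + q) = DQ i p + DQ i q"
  by (rule DQ_unique) (simp add: distrib_left DQ_eq swap_add)
lemma DQ_mconst_mult: "DQ i (mconst c * p) = mconst c * DQ i p"
proof (rule DQ_unique)
  have "dd i * (mconst c * DQ i p) = mconst c * (dd i * DQ i p)" by (simp add: ac_simps)
  thus "dd i * (mconst c * DQ i p) = mconst c * p - swap_var i (mconst c * p)"
    by (simp add: DQ_eq swap_mult algebra_simps)
qed
lemma DQ_zero[simp]: "DQ i 0 = 0"
  by (rule DQ_unique) simp
lemma DQ_sum: "DQ i (sum f A) = (\<Sum>x\<in>A. DQ i (f x))"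
  by (induction A rule: infinite_finite_induct) (auto simp: DQ_add)
lemma DQ_swap: "DQ i (swap_var i p) = - DQ i p"
  by (rule DQ_unique) (simp add: DQ_eq algebra_simps)
lemma swap_dd: "swap_var i (dd i) = - dd i"
  by (simp add: dd_def swap_minus)
lemma swap_DQ: "swap_var i (DQ i p) = DQ i p"
proof -
  have "swap_var i (dd i * DQ i p) = swap_var i p - p" by (simp add: DQ_eq swap_minus)
  hence "dd i * swap_var i (DQ i p) = p - swap_var i p"
    by (simp add: swap_mult swap_dd algebra_simps)
  thus ?thesis using DQ_unique by metis
qed

lemma ddiff_add: "ddiff i (p + q) = ddiff i p + ddiff i q"
  by (simp add: ddiff_DQ DQ_add distrib_left)
lemma ddiff_mconst_mult: "ddiff i (mconst c * p) = mconst c * ddiff i p"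
  by (simp add: ddiff_DQ DQ_mconst_mult mult.left_commute)
lemma ddiff_zero[simp]: "ddiff i 0 = 0"
  by (simp add: ddiff_DQ)
lemma ddiff_sum: "ddiff i (sum f A) = (\<Sum>x\<in>A. ddiff i (f x))"
  by (simp add: ddiff_DQ DQ_sum sum_distrib_left)
lemma ddiff_ddiff: "ddiff i (ddiff i p) = - ddiff i p"
proof -
  have "DQ i (mvar (Suc i) * DQ i p) = - DQ i p"
    by (rule DQ_unique) (simp add: swap_mult swap_DQ dd_def algebra_simps)
  thus ?thesis by (simp add: ddiff_DQ)
qed
lemma ddiff_swap_sum: "ddiff i (swap_var i p) + swap_var i (ddiff i p) = p - swap_var i p"
  by (simp add: ddiff_DQ DQ_swap swap_mult swap_DQ DQ_eq[symmetric] dd_def algebra_simps)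

lemma ss_pow: "ss ^ n = Fract ([:0, 1:] ^ n) 1"
  by (induction n) (simp_all add: ss_def One_fract_def)

lemma ss_nz[simp]: "ss \<noteq> 0"
  by (simp add: ss_def Zero_fract_def eq_fract)

lemma ss_pow_ne1: "n \<noteq> 0 \<Longrightarrow> ss ^ n \<noteq> 1"
proof
  assume "n \<noteq> 0" "ss ^ n = 1"
  hence "([:0, 1:] :: complex poly poly) ^ n = 1"
    by (simp add: ss_pow One_fract_def eq_fract)
  hence "degree (([:0, 1:] :: complex poly poly) ^ n) = 0" by simp
  moreover have "degree (([:0, 1:] :: complex poly poly) ^ n) = n"
    by (simp add: degree_power_eq)
  ultimately show False using \<open>n \<noteq> 0\<close> by simp
qed

lemma ss_powi_ne1: "k \<noteq> 0 \<Longrightarrow> ss powi k \<noteq> 1"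
proof
  assume k: "k \<noteq> 0" "ss powi k = 1"
  show False
  proof (cases "k \<ge> 0")
    case True
    then have "ss powi k = ss ^ nat k" by (simp add: power_int_def)
    then show False using k ss_pow_ne1[of "nat k"] True by simp
  next
    case False
    then have "ss powi k = inverse (ss powi (-k))" using power_int_minus[of ss "-k"] by simp
    also have "ss powi (-k) = ss ^ nat (-k)" using False by (simp add: power_int_def)
    finally have "ss powi k = inverse (ss ^ nat (-k))" .
    then show False using k ss_pow_ne1[of "nat (-k)"] False by (simp add: field_simps power_inverse)
  qed
qed

lemma coef_b_nz: "m \<ge> 2 \<Longrightarrow> coef_b m \<noteq> 0"
  unfolding coef_b_def using ss_powi_ne1[of "m+1"] ss_powi_ne1[of "m-1"] ss_powi_ne1[of m]
  by simp

section \<open>Tableaux\<close>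

lemma tabsD:
  assumes "t \<in> tabs N lam"
  shows "bij_betw t {1..N} (cells lam)" "\<And>k. k \<notin> {1..N} \<Longrightarrow> t k = (0,0)"
    "\<And>i j. i\<in>{1..N} \<Longrightarrow> j\<in>{1..N} \<Longrightarrow> fst (t i) = fst (t j) \<Longrightarrow> snd (t i) < snd (t j) \<Longrightarrow> j < i"
    "\<And>i j. i\<in>{1..N} \<Longrightarrow> j\<in>{1..N} \<Longrightarrow> snd (t i) = snd (t j) \<Longrightarrow> fst (t i) < fst (t j) \<Longrightarrow> j < i"
proof -
  have H: "bij_betw t {1..N} (cells lam) \<and> (\<forall>k. k \<notin> {1..N} \<longrightarrow> t k = (0, 0))
      \<and> (\<forall>i\<in>{1..N}. \<forall>j\<in>{1..N}. fst (t i) = fst (t j) \<and> snd (t i) < snd (t j) \<longrightarrow> j < i)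
      \<and> (\<forall>i\<in>{1..N}. \<forall>j\<in>{1..N}. snd (t i) = snd (t j) \<and> fst (t i) < fst (t j) \<longrightarrow> j < i)"
    using assms unfolding tabs_def mem_Collect_eq .
  show "bij_betw t {1..N} (cells lam)" using H by (elim conjE)
  show "\<And>k. k \<notin> {1..N} \<Longrightarrow> t k = (0,0)" using H by (elim conjE) blast
  show "\<And>i j. i\<in>{1..N} \<Longrightarrow> j\<in>{1..N} \<Longrightarrow> fst (t i) = fst (t j) \<Longrightarrow> snd (t i) < snd (t j) \<Longrightarrow> j < i"
    using H by (elim conjE) blast
  show "\<And>i j. i\<in>{1..N} \<Longrightarrow> j\<in>{1..N} \<Longrightarrow> snd (t i) = snd (t j) \<Longrightarrow> fst (t i) < fst (t j) \<Longrightarrow> j < i"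
    using H by (elim conjE) blast
qed

lemma cells_in: "t \<in> tabs N lam \<Longrightarrow> k \<in> {1..N} \<Longrightarrow> t k \<in> cells lam"
  by (rule bij_betw_apply[OF tabsD(1)])

lemma cells_ex: "t \<in> tabs N lam \<Longrightarrow> c \<in> cells lam \<Longrightarrow> \<exists>j\<in>{1..N}. t j = c"
proof -
  assume t: "t \<in> tabs N lam" and c: "c \<in> cells lam"
  have "t ` {1..N} = cells lam" using tabsD(1)[OF t] by (simp add: bij_betw_def)
  thus ?thesis using c by (metis imageE)
qed

lemma cell_down:
  assumes "is_partition N lam" "(r2, c) \<in> cells lam" "r1 < r2"
  shows "(r1, c) \<in> cells lam"
proof -
  from assms have "lam ! r2 \<le> lam ! r1"
    using sorted_wrt_nth_less[of "(\<ge>)" lam r1 r2] unfolding is_partition_def cells_def by auto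
  then show ?thesis using assms unfolding cells_def by auto
qed

lemma tab_adj:
  assumes P: "is_partition N lam" and t: "t \<in> tabs N lam" and i: "1 \<le> i" "i < N"
    and r: "fst (t i) \<noteq> fst (t (Suc i))" and c: "snd (t i) \<noteq> snd (t (Suc i))"
  shows "(fst (t i) < fst (t (Suc i)) \<and> snd (t (Suc i)) < snd (t i)) \<or>
         (fst (t (Suc i)) < fst (t i) \<and> snd (t i) < snd (t (Suc i)))"
proof (rule ccontr)
  assume H: "\<not> ?thesis"
  obtain r1 c1 where 1: "t i = (r1, c1)" by fastforce
  obtain r2 c2 where 2: "t (Suc i) = (r2, c2)" by fastforce
  have iN: "i \<in> {1..N}" "Suc i \<in> {1..N}" using i by auto
  have cl1: "(r1, c1) \<in> cells lam" using cells_in[OF t iN(1)] 1 by simp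
  have cl2: "(r2, c2) \<in> cells lam" using cells_in[OF t iN(2)] 2 by simp
  from H r c 1 2 have "(r1 < r2 \<and> c1 < c2) \<or> (r2 < r1 \<and> c2 < c1)" by auto
  then show False
  proof
    assume a: "r1 < r2 \<and> c1 < c2"
    then have "(r1, c2) \<in> cells lam" using cell_down[OF P cl2] by auto
    then obtain j where j: "j \<in> {1..N}" "t j = (r1, c2)" using cells_ex[OF t] by blast
    have "j < i" using tabsD(3)[OF t iN(1) j(1)] 1 j a by simp
    moreover have "Suc i < j" using tabsD(4)[OF t j(1) iN(2)] 2 j a by simp
    ultimately show False by simp
  next
    assume a: "r2 < r1 \<and> c2 < c1"
    then have "(r2, c1) \<in> cells lam" using cell_down[OF P cl1] by auto
    then obtain j where j: "j \<in> {1..N}" "t j = (r2, c1)" using cells_ex[OF t] by blast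
    have "j < Suc i" using tabsD(3)[OF t iN(2) j(1)] 2 j a by simp
    moreover have "i < j" using tabsD(4)[OF t j(1) iN(1)] 1 j a by simp
    ultimately show False by simp
  qed
qed

lemma swp_less: "swp i (Suc i) b < swp i (Suc i) a \<Longrightarrow> \<not> (a = i \<and> b = Suc i) \<Longrightarrow> \<not> (a = Suc i \<and> b = i) \<Longrightarrow> b < a"
  unfolding swp_def by (auto split: if_splits)

lemma swp_in: "1 \<le> i \<Longrightarrow> i < N \<Longrightarrow> k \<in> {1..N} \<Longrightarrow> swp i (Suc i) k \<in> {1..N}"
  unfolding swp_def by auto

lemma tswap_tabs:
  assumes t: "t \<in> tabs N lam" and i: "1 \<le> i" "i < N"
    and r: "fst (t i) \<noteq> fst (t (Suc i))" and c: "snd (t i) \<noteq> snd (t (Suc i))"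
  shows "tswap t i (Suc i) \<in> tabs N lam"
proof -
  let ?s = "swp i (Suc i)"
  have bs: "bij_betw ?s {1..N} {1..N}"
    by (rule bij_betw_byWitness[where f' = ?s]) (use swp_in[OF i] in auto)
  have b: "bij_betw (t \<circ> ?s) {1..N} (cells lam)"
    using bij_betw_trans[OF bs tabsD(1)[OF t]] .
  have o: "\<And>k. k \<notin> {1..N} \<Longrightarrow> (t \<circ> ?s) k = (0,0)"
    using tabsD(2)[OF t] i by (auto simp: swp_def)
  have row: "b < a" if ab: "a\<in>{1..N}" "b\<in>{1..N}" "fst ((t \<circ> ?s) a) = fst ((t \<circ> ?s) b)"
      "snd ((t \<circ> ?s) a) < snd ((t \<circ> ?s) b)" for a b
  proof (rule swp_less)
    show "?s b < ?s a" using tabsD(3)[OF t swp_in[OF i ab(1)] swp_in[OF i ab(2)]] ab by simp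
    show "\<not> (a = i \<and> b = Suc i)" using ab r by (auto simp: swp_def)
    show "\<not> (a = Suc i \<and> b = i)" using ab r by (auto simp: swp_def)
  qed
  have col: "b < a" if ab: "a\<in>{1..N}" "b\<in>{1..N}" "snd ((t \<circ> ?s) a) = snd ((t \<circ> ?s) b)"
      "fst ((t \<circ> ?s) a) < fst ((t \<circ> ?s) b)" for a b
  proof (rule swp_less)
    show "?s b < ?s a" using tabsD(4)[OF t swp_in[OF i ab(1)] swp_in[OF i ab(2)]] ab by simp
    show "\<not> (a = i \<and> b = Suc i)" using ab c by (auto simp: swp_def)
    show "\<not> (a = Suc i \<and> b = i)" using ab c by (auto simp: swp_def)
  qed
  show ?thesis unfolding tswap_def tabs_def mem_Collect_eq
    apply (intro conjI)
    subgoal by (rule b)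
    subgoal using o by (intro allI impI) assumption
    subgoal by (intro ballI impI, elim conjE, rule row)
    subgoal by (intro ballI impI, elim conjE, rule col)
    done
qed

lemma tswap_tswap[simp]: "tswap (tswap t i j) i j = t"
  by (simp add: tswap_def fun_eq_iff)

lemma tswap_i[simp]: "tswap t i (Suc i) i = t (Suc i)" "tswap t i (Suc i) (Suc i) = t i"
  by (simp_all add: tswap_def swp_def)

lemma tswap_neq:
  assumes t: "t \<in> tabs N lam" and i: "1 \<le> i" "i < N"
  shows "tswap t i (Suc i) \<noteq> t"
proof
  assume "tswap t i (Suc i) = t"
  hence "t (Suc i) = t i" by (metis tswap_i(1))
  moreover have "inj_on t {1..N}" using tabsD(1)[OF t] bij_betw_def by blast
  moreover have "i \<in> {1..N}" "Suc i \<in> {1..N}" using i by auto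
  ultimately show False using inj_onD by fastforce
qed

lemma finite_cells: "finite (cells lam)"
proof -
  have "cells lam = Sigma {..<length lam} (\<lambda>r. {..<lam ! r})"
    unfolding cells_def by auto
  thus ?thesis by simp
qed

lemma finite_tabs: "finite (tabs N lam)"
proof -
  have "tabs N lam \<subseteq> {f. \<forall>x. (x \<in> {1..N} \<longrightarrow> f x \<in> cells lam) \<and> (x \<notin> {1..N} \<longrightarrow> f x = (0,0))}"
  proof (intro subsetI CollectI allI conjI impI)
    fix f x assume "f \<in> tabs N lam"
    then show "x \<in> {1..N} \<Longrightarrow> f x \<in> cells lam" "x \<notin> {1..N} \<Longrightarrow> f x = (0,0)"
      using tabsD(2) cells_in by auto
  qed
  moreover have "finite {f. \<forall>x. (x \<in> {1..N} \<longrightarrow> f x \<in> cells lam) \<and> (x \<notin> {1..N} \<longrightarrow> f x = (0,0))}"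
    by (rule finite_set_of_finite_funs) (simp_all add: finite_cells)
  ultimately show ?thesis using finite_subset by blast
qed

section \<open>Hecke algebra on V_lambda\<close>

lemma hecke_row: "fst (t i) = fst (t (Suc i)) \<Longrightarrow> hecke_img t i = (\<lambda>t'. ss * delta t t')"
  unfolding hecke_img_def by simp

lemma hecke_col: "fst (t i) \<noteq> fst (t (Suc i)) \<Longrightarrow> snd (t i) = snd (t (Suc i)) \<Longrightarrow>
   hecke_img t i = (\<lambda>t'. - delta t t')"
  unfolding hecke_img_def by simp

lemma hecke_up: "fst (t i) \<noteq> fst (t (Suc i)) \<Longrightarrow> snd (t i) \<noteq> snd (t (Suc i)) \<Longrightarrow>
   fst (t (Suc i)) < fst (t i) \<Longrightarrow>
   hecke_img t i = (\<lambda>t'. coef_a (CT t (Suc i) - CT t i) * delta t t'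
      + coef_b (CT t (Suc i) - CT t i) * delta (tswap t i (Suc i)) t')"
  unfolding hecke_img_def by (simp add: Let_def)

lemma hecke_down: "fst (t i) \<noteq> fst (t (Suc i)) \<Longrightarrow> snd (t i) \<noteq> snd (t (Suc i)) \<Longrightarrow>
   \<not> fst (t (Suc i)) < fst (t i) \<Longrightarrow> t2 = tswap t i (Suc i) \<Longrightarrow>
   m = CT t2 (Suc i) - CT t2 i \<Longrightarrow>
   hecke_img t i = (\<lambda>t'. (ss - 1 - coef_a m) * delta t t'
      + (((ss - 1) * coef_a m + ss - (coef_a m)^2) / coef_b m) * delta t2 t')"
  unfolding hecke_img_def by (simp add: Let_def)

lemma sum_delta2:
  assumes "finite A" "t \<in> A" "t2 \<in> A"
  shows "(\<Sum>u\<in>A. (\<alpha> * delta t u + \<beta> * delta t2 u) * g u) = \<alpha> * g t + \<beta> * (g t2 :: K)"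
proof -
  have "(\<Sum>u\<in>A. (\<alpha> * delta t u + \<beta> * delta t2 u) * g u)
      = (\<Sum>u\<in>A. if u = t then \<alpha> * g u else 0) + (\<Sum>u\<in>A. if u = t2 then \<beta> * g u else 0)"
    unfolding sum.distrib[symmetric] by (rule sum.cong) (auto simp: delta_def algebra_simps)
  also have "\<dots> = \<alpha> * g t + \<beta> * g t2" using assms by simp
  finally show ?thesis .
qed

lemma quad_up:
  fixes a b c s x y :: K
  assumes "b * c = (s - 1) * a + s - a^2"
  shows "a * (a * x + b * y) + b * ((s - 1 - a) * y + c * x) = (s - 1) * (a * x + b * y) + s * x"
proof -
  have "a * (a * x + b * y) + b * ((s - 1 - a) * y + c * x) = a * a * x + (s - 1) * b * y + (b * c) * x"
    by (simp add: algebra_simps)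
  also have "\<dots> = (s - 1) * (a * x + b * y) + s * x"
    unfolding assms by (simp add: algebra_simps power2_eq_square)
  finally show ?thesis .
qed

lemma quad_down:
  fixes a b c s x y :: K
  assumes "b * c = (s - 1) * a + s - a^2"
  shows "(s - 1 - a) * ((s - 1 - a) * x + c * y) + c * (a * y + b * x) = (s - 1) * ((s - 1 - a) * x + c * y) + s * x"
proof -
  have "(s - 1 - a) * ((s - 1 - a) * x + c * y) + c * (a * y + b * x) = (s - 1 - a) * (s - 1 - a) * x + (s - 1) * c * y + (b * c) * x"
    by (simp add: algebra_simps)
  also have "\<dots> = (s - 1) * ((s - 1 - a) * x + c * y) + s * x"
    unfolding assms by (simp add: algebra_simps power2_eq_square)
  finally show ?thesis .
qed

lemma m_ge2:
  assumes P: "is_partition N lam" and t: "t \<in> tabs N lam" and i: "1 \<le> i" "i < N"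
    and r: "fst (t i) \<noteq> fst (t (Suc i))" and c: "snd (t i) \<noteq> snd (t (Suc i))"
    and up: "fst (t (Suc i)) < fst (t i)"
  shows "CT t (Suc i) - CT t i \<ge> 2"
  using tab_adj[OF P t i r c] up unfolding CT_def by auto

lemma tswap_props:
  assumes "t2 = tswap t i (Suc i)"
  shows "t2 i = t (Suc i)" "t2 (Suc i) = t i" "tswap t2 i (Suc i) = t"
  using assms by simp_all

lemma hk_supp:
  assumes P: "is_partition N lam" and t: "t \<in> tabs N lam" and i: "1 \<le> i" "i < N"
    and t': "t' \<notin> tabs N lam"
  shows "hecke_img t i t' = 0"
proof -
  have d: "delta t t' = 0" using t t' by (auto simp: delta_def)
  show ?thesis
  proof (cases "fst (t i) = fst (t (Suc i))")
    case True then show ?thesis by (simp add: hecke_row d)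
  next
    case r: False
    show ?thesis
    proof (cases "snd (t i) = snd (t (Suc i))")
      case True then show ?thesis using r by (simp add: hecke_col d)
    next
      case c: False
      have d2: "delta (tswap t i (Suc i)) t' = 0"
        using tswap_tabs[OF t i r c] t' by (auto simp: delta_def)
      show ?thesis
        by (cases "fst (t (Suc i)) < fst (t i)")
           (simp_all add: hecke_up[OF r c] hecke_down[OF r c _ refl refl] d d2)
    qed
  qed
qed

lemma hk_quad:
  assumes P: "is_partition N lam" and t: "t \<in> tabs N lam" and i: "1 \<le> i" "i < N"
  shows "(\<Sum>u\<in>tabs N lam. hecke_img t i u * hecke_img u i t')
     = (ss - 1) * hecke_img t i t' + ss * delta t t'"
proof -
  note fin = finite_tabs[of N lam]
  show ?thesis
  proof (cases "fst (t i) = fst (t (Suc i))")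
    case True
    have "(\<Sum>u\<in>tabs N lam. hecke_img t i u * hecke_img u i t')
       = (\<Sum>u\<in>tabs N lam. (ss * delta t u + 0 * delta t u) * hecke_img u i t')"
      by (simp add: hecke_row[OF True])
    also have "\<dots> = ss * hecke_img t i t' + 0 * hecke_img t i t'"
      by (rule sum_delta2[OF fin t t])
    finally show ?thesis by (simp add: hecke_row[OF True] algebra_simps)
  next
    case r: False
    show ?thesis
    proof (cases "snd (t i) = snd (t (Suc i))")
      case True
      have "(\<Sum>u\<in>tabs N lam. hecke_img t i u * hecke_img u i t')
         = (\<Sum>u\<in>tabs N lam. ((-1) * delta t u + 0 * delta t u) * hecke_img u i t')"
        by (simp add: hecke_col[OF r True])
      also have "\<dots> = (-1) * hecke_img t i t' + 0 * hecke_img t i t'"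
        by (rule sum_delta2[OF fin t t])
      finally show ?thesis by (simp add: hecke_col[OF r True] algebra_simps)
    next
      case c: False
      define t2 where "t2 = tswap t i (Suc i)"
      have t2: "t2 \<in> tabs N lam" unfolding t2_def by (rule tswap_tabs[OF t i r c])
      note tp = tswap_props[OF t2_def]
      have r2: "fst (t2 i) \<noteq> fst (t2 (Suc i))" and c2: "snd (t2 i) \<noteq> snd (t2 (Suc i))"
        using r c tp by auto
      show ?thesis
      proof (cases "fst (t (Suc i)) < fst (t i)")
        case up: True
        define m where "m = CT t (Suc i) - CT t i"
        define a where "a = coef_a m"
        define b where "b = coef_b m"
        have bnz: "b \<noteq> 0" unfolding b_def m_def by (rule coef_b_nz[OF m_ge2[OF P t i r c up]])
        have Ht: "hecke_img t i = (\<lambda>t'. a * delta t t' + b * delta t2 t')"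
          unfolding a_def b_def m_def t2_def by (rule hecke_up[OF r c up])
        have Ht2: "hecke_img t2 i = (\<lambda>t'. (ss - 1 - a) * delta t2 t'
             + (((ss - 1) * a + ss - a^2) / b) * delta t t')"
          unfolding a_def b_def
          by (rule hecke_down[OF r2 c2 _ tp(3)[symmetric]]) (use up tp m_def in auto)
        have "(\<Sum>u\<in>tabs N lam. hecke_img t i u * hecke_img u i t')
           = (\<Sum>u\<in>tabs N lam. (a * delta t u + b * delta t2 u) * hecke_img u i t')"
          by (simp add: Ht)
        also have "\<dots> = a * hecke_img t i t' + b * hecke_img t2 i t'"
          by (rule sum_delta2[OF fin t t2])
        also have "\<dots> = (ss - 1) * hecke_img t i t' + ss * delta t t'"
          unfolding Ht Ht2 by (rule quad_up) (use bnz in simp)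
        finally show ?thesis .
      next
        case down: False
        have up2: "fst (t2 (Suc i)) < fst (t2 i)" using down r tp by auto
        define m where "m = CT t2 (Suc i) - CT t2 i"
        define a where "a = coef_a m"
        define b where "b = coef_b m"
        have bnz: "b \<noteq> 0" unfolding b_def m_def by (rule coef_b_nz[OF m_ge2[OF P t2 i r2 c2 up2]])
        have Ht2: "hecke_img t2 i = (\<lambda>t'. a * delta t2 t' + b * delta t t')"
          unfolding a_def b_def m_def using hecke_up[OF r2 c2 up2] tp(3) by simp
        have Ht: "hecke_img t i = (\<lambda>t'. (ss - 1 - a) * delta t t'
             + (((ss - 1) * a + ss - a^2) / b) * delta t2 t')"
          unfolding a_def b_def by (rule hecke_down[OF r c down t2_def m_def])
        have "(\<Sum>u\<in>tabs N lam. hecke_img t i u * hecke_img u i t')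
           = (\<Sum>u\<in>tabs N lam. ((ss - 1 - a) * delta t u + (((ss - 1) * a + ss - a^2) / b) * delta t2 u) * hecke_img u i t')"
          by (simp add: Ht)
        also have "\<dots> = (ss - 1 - a) * hecke_img t i t' + (((ss - 1) * a + ss - a^2) / b) * hecke_img t2 i t'"
          by (rule sum_delta2[OF fin t t2])
        also have "\<dots> = (ss - 1) * hecke_img t i t' + ss * delta t t'"
          unfolding Ht Ht2 by (rule quad_down) (use bnz in simp)
        finally show ?thesis .
      qed
    qed
  qed
qed

definition msupp :: "nat \<Rightarrow> nat list \<Rightarrow> melem \<Rightarrow> bool" where
  "msupp N lam f \<longleftrightarrow> (\<forall>t. t \<notin> tabs N lam \<longrightarrow> f t = 0)"

lemma mconst_uminus: "mconst (- a) = - mconst a"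
  unfolding mconst_def by (simp add: single_uminus)

lemma mconst_sm1: "mconst (ss - 1) = - mconst (1 - ss)"
  by (metis minus_diff_eq mconst_uminus)

lemma mconst_sum: "mconst (sum f A) = (\<Sum>x\<in>A. mconst (f x))"
  by (induction A rule: infinite_finite_induct) (auto simp: mconst_add)

lemma opT_supp:
  assumes P: "is_partition N lam" and i: "1 \<le> i" "i < N" and f: "msupp N lam f"
  shows "msupp N lam (opT N lam i f)"
  unfolding msupp_def
proof (intro allI impI)
  fix t' assume t': "t' \<notin> tabs N lam"
  have "f t' = 0" using f t' by (simp add: msupp_def)
  moreover have "\<And>t. t \<in> tabs N lam \<Longrightarrow> hecke_img t i t' = 0" using hk_supp[OF P _ i t'] by blast
  ultimately show "opT N lam i f t' = 0" unfolding opT_def by simp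
qed

lemma ring_final:
  fixes A B X Y Z P1 P2 W :: mpoly
  assumes "P1 + P2 = Y - Z" "B = - A"
  shows "A * (- (A * X) + P1) + (A * P2 + (B * Y + W)) = B * (A * X + Z) + W"
proof -
  have "A * (- (A * X) + P1) + (A * P2 + (B * Y + W)) = - (A * A * X) + A * (P1 + P2) + B * Y + W"
    by (simp add: algebra_simps)
  also have "\<dots> = B * (A * X + Z) + W" unfolding assms by (simp add: algebra_simps)
  finally show ?thesis .
qed

lemma opT_quad:
  assumes P: "is_partition N lam" and i: "1 \<le> i" "i < N" and f: "msupp N lam f"
  shows "opT N lam i (opT N lam i f) t' = mconst (ss - 1) * opT N lam i f t' + mconst ss * f t'"
proof -
  let ?T = "tabs N lam" and ?A = "mconst (1 - ss)"
  let ?Hm = "\<lambda>u t. mconst (hecke_img u i t)"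
  define g where "g = opT N lam i f"
  have g: "\<And>t. g t = ?A * ddiff i (f t) + (\<Sum>u\<in>?T. ?Hm u t * swap_var i (f u))"
    unfolding g_def opT_def ..
  have s1: "ddiff i (g t') = - (?A * ddiff i (f t')) + (\<Sum>u\<in>?T. ?Hm u t' * ddiff i (swap_var i (f u)))"
    unfolding g by (simp add: ddiff_add ddiff_mconst_mult ddiff_sum ddiff_ddiff)
  have s2: "\<And>t. swap_var i (g t) = ?A * swap_var i (ddiff i (f t)) + (\<Sum>u\<in>?T. ?Hm u t * f u)"
    unfolding g by (simp add: swap_add swap_mult swap_sum)
  define X where "X = ddiff i (f t')"
  define Y where "Y = (\<Sum>u\<in>?T. ?Hm u t' * f u)"
  define Z where "Z = (\<Sum>u\<in>?T. ?Hm u t' * swap_var i (f u))"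
  define P1 where "P1 = (\<Sum>u\<in>?T. ?Hm u t' * ddiff i (swap_var i (f u)))"
  define P2 where "P2 = (\<Sum>u\<in>?T. ?Hm u t' * swap_var i (ddiff i (f u)))"
  have P12: "P1 + P2 = Y - Z"
    unfolding P1_def P2_def Y_def Z_def sum.distrib[symmetric] sum_subtractf[symmetric]
    by (rule sum.cong) (simp_all add: distrib_left[symmetric] right_diff_distrib[symmetric] ddiff_swap_sum)
  have dsum: "(\<Sum>t\<in>?T. ?Hm t t' * (\<Sum>u\<in>?T. ?Hm u t * f u)) = mconst (ss - 1) * Y + mconst ss * f t'"
  proof -
    have "(\<Sum>t\<in>?T. ?Hm t t' * (\<Sum>u\<in>?T. ?Hm u t * f u)) = (\<Sum>u\<in>?T. \<Sum>t\<in>?T. ?Hm u t * ?Hm t t' * f u)"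
      by (subst sum.swap) (simp add: sum_distrib_left ac_simps)
    also have "\<dots> = (\<Sum>u\<in>?T. mconst (\<Sum>t\<in>?T. hecke_img u i t * hecke_img t i t') * f u)"
      by (simp add: mconst_sum mconst_mult sum_distrib_right)
    also have "\<dots> = (\<Sum>u\<in>?T. mconst ((ss - 1) * hecke_img u i t' + ss * delta u t') * f u)"
      by (rule sum.cong) (simp_all add: hk_quad[OF P _ i])
    also have "\<dots> = mconst (ss - 1) * Y + (\<Sum>u\<in>?T. mconst (ss * delta u t') * f u)"
      unfolding Y_def sum_distrib_left sum.distrib[symmetric]
      by (rule sum.cong[OF refl]) (simp only: mconst_add mconst_mult, simp add: algebra_simps)
    also have "(\<Sum>u\<in>?T. mconst (ss * delta u t') * f u) = mconst ss * f t'"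
    proof (cases "t' \<in> ?T")
      case True
      have "(\<Sum>u\<in>?T. mconst (ss * delta u t') * f u) = (\<Sum>u\<in>?T. if u = t' then mconst ss * f u else 0)"
        by (rule sum.cong) (auto simp: delta_def)
      then show ?thesis using True finite_tabs by simp
    next
      case False
      then have "f t' = 0" using f by (simp add: msupp_def)
      moreover have "(\<Sum>u\<in>?T. mconst (ss * delta u t') * f u) = 0"
        by (rule sum.neutral) (use False in \<open>auto simp: delta_def\<close>)
      ultimately show ?thesis by simp
    qed
    finally show ?thesis .
  qed
  have "opT N lam i g t' = ?A * ddiff i (g t') + (\<Sum>t\<in>?T. ?Hm t t' * swap_var i (g t))"
    unfolding opT_def ..
  also have "\<dots> = ?A * (- (?A * X) + P1) + (?A * P2 + (mconst (ss - 1) * Y + mconst ss * f t'))"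
    unfolding s1 s2 X_def P1_def P2_def dsum[symmetric]
    by (simp add: distrib_left sum.distrib sum_distrib_left ac_simps)
  also have "\<dots> = mconst (ss - 1) * (?A * X + Z) + mconst ss * f t'"
    by (rule ring_final[OF P12]) (rule mconst_sm1)
  also have "\<dots> = mconst (ss - 1) * g t' + mconst ss * f t'"
    unfolding g X_def Z_def ..
  finally show ?thesis unfolding g_def .
qed

lemma opTinv_opT:
  assumes P: "is_partition N lam" and i: "1 \<le> i" "i < N" and f: "msupp N lam f"
  shows "opTinv N lam i (opT N lam i f) = f"
proof
  fix t'
  have "opTinv N lam i (opT N lam i f) t'
      = mconst (inverse ss) * ((mconst (ss - 1) + mconst (1 - ss)) * opT N lam i f t' + mconst ss * f t')"
    unfolding opTinv_def opT_quad[OF P i f] by (simp add: algebra_simps)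
  also have "mconst (ss - 1) + mconst (1 - ss) = 0" by (simp add: mconst_sm1)
  also have "mconst (inverse ss) * (0 * opT N lam i f t' + mconst ss * f t') = f t'"
    by (simp add: mult.assoc[symmetric] mconst_mult[symmetric])
  finally show "opTinv N lam i (opT N lam i f) t' = f t'" .
qed

lemma scal_scal: "scal a (scal b f) = scal (a * b) f"
  by (simp add: scal_def fun_eq_iff mconst_mult mult.assoc)
lemma scal_one: "scal 1 f = f"
  by (simp add: scal_def)
lemma msupp_scal: "msupp N lam f \<Longrightarrow> msupp N lam (scal c f)"
  by (simp add: msupp_def scal_def)

lemma opT_scal: "opT N lam i (scal c f) = scal c (opT N lam i f)"
  by (simp add: fun_eq_iff opT_def scal_def ddiff_mconst_mult swap_mult sum_distrib_left algebra_simps)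
lemma opTinv_scal: "opTinv N lam i (scal c f) = scal c (opTinv N lam i f)"
  unfolding opTinv_def opT_scal by (simp add: fun_eq_iff scal_def algebra_simps)
lemma opx_scal: "opx N (scal c f) = scal c (opx N f)"
  by (simp add: fun_eq_iff opx_def scal_def algebra_simps)

lemma act_Nil[simp]: "act f [] = f" by (simp add: act_def)
lemma act_Cons[simp]: "act f (A # xs) = act (A f) xs" by (simp add: act_def)
lemma act_append: "act f (xs @ ys) = act (act f xs) ys" by (simp add: act_def)

lemma act_opT_supp:
  assumes P: "is_partition N lam"
  shows "msupp N lam g \<Longrightarrow> \<forall>x\<in>set xs. 1 \<le> x \<and> x < N \<Longrightarrow> msupp N lam (act g (map (opT N lam) xs))"
proof (induction xs arbitrary: g)
  case Nil then show ?case by simp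
next
  case (Cons a xs)
  have "msupp N lam (opT N lam a g)" using opT_supp[OF P _ _ Cons.prems(1)] Cons.prems(2) by simp
  then show ?case using Cons.IH Cons.prems(2) by simp
qed

lemma act_scal_opTinv: "act (scal c f) (map (opTinv N lam) xs) = scal c (act f (map (opTinv N lam) xs))"
  by (induction xs arbitrary: f) (simp_all add: opTinv_scal)

lemma inv_chain:
  assumes P: "is_partition N lam"
  shows "msupp N lam g \<Longrightarrow> \<forall>x\<in>set xs. 1 \<le> x \<and> x < N \<Longrightarrow>
    act (act g (map (opT N lam) (rev xs))) (map (opTinv N lam) xs) = g"
proof (induction xs)
  case Nil then show ?case by simp
next
  case (Cons x xs)
  let ?h = "act g (map (opT N lam) (rev xs))"
  have hs: "msupp N lam ?h" using act_opT_supp[OF P Cons.prems(1)] Cons.prems(2) by simp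
  have "act g (map (opT N lam) (rev (x # xs))) = opT N lam x ?h"
    by (simp add: act_append)
  then show ?case using Cons opTinv_opT[OF P _ _ hs, of x] by simp
qed

lemma opw_supp:
  assumes P: "is_partition N lam" and N: "2 \<le> N"
  shows "msupp N lam (opw N lam f)"
  unfolding msupp_def
proof (intro allI impI)
  fix t' assume t': "t' \<notin> tabs N lam"
  obtain m where m: "N = Suc m" "1 \<le> m" using N by (cases N) auto
  have e: "[1..<N] = [1..<N - 1] @ [N - 1]" using m by (simp add: upt_Suc_append)
  have "\<And>u. vec_w N lam u t' = 0"
  proof -
    fix u
    have "vec_w N lam u t' = vec_T N lam (N - 1) (foldl (\<lambda>v i. vec_T N lam i v) u [1..<N - 1]) t'"
      unfolding vec_w_def e by simp
    also have "\<dots> = 0" unfolding vec_T_def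
      using hk_supp[OF P _ _ _ t', of _ "N - 1"] N by simp
    finally show "vec_w N lam u t' = 0" .
  qed
  then show "opw N lam f t' = 0" unfolding opw_def by simp
qed

theorem proposition4p1:
  fixes N :: nat and lam :: "nat list"
  assumes "2 \<le> N" and "is_partition N lam"
  shows "(\<forall>f\<in>Mcarrier N lam. Phi' N lam f = scal (ss ^ (N - 1)) (Phi N lam (Xi N lam 1 f)))
    \<and> (\<forall>(v :: nat \<Rightarrow> nat) T f. T \<in> tabs N lam \<longrightarrow> f \<in> Mcarrier N lam \<longrightarrow>
         (\<forall>i\<in>{1..N}. Xi N lam i f = scal (qq ^ v i * ss powi CT T (rv N v i)) f) \<longrightarrow>
         Phi' N lam f = scal (ss powi (int N - 1 + CT T (rv N v 1)) * qq ^ v 1) (Phi N lam f))"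
proof -
  note N = assms(1) and P = assms(2)
  have e1: "int N - 1 = int (N - 1)" using N by simp
  have ssN: "ss ^ (N - 1) = ss powi (int N - 1)"
    by (simp only: e1 power_int_of_nat)
  have part1: "Phi' N lam f = scal (ss ^ (N - 1)) (Phi N lam (Xi N lam 1 f))" for f
  proof -
    let ?c = "ss powi (int 1 - int N)"
    have xs: "\<forall>x\<in>set [1..<N]. 1 \<le> x \<and> x < N" by simp
    have "Xi N lam 1 f = scal ?c (act (opw N lam f) (map (opT N lam) (rev [1..<N])))"
      unfolding Xi_def by simp
    then have "Phi N lam (Xi N lam 1 f) = opx N (scal ?c (opw N lam f))"
      unfolding Phi_def using inv_chain[OF P opw_supp[OF P N] xs] by (simp add: act_scal_opTinv)
    also have "\<dots> = scal ?c (Phi' N lam f)" by (simp add: opx_scal Phi'_def)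
    finally have "scal (ss ^ (N - 1)) (Phi N lam (Xi N lam 1 f)) = scal (ss ^ (N - 1) * ?c) (Phi' N lam f)"
      by (simp add: scal_scal)
    also have "ss ^ (N - 1) * ?c = 1"
      unfolding ssN by (simp add: power_int_add[symmetric])
    finally show ?thesis by (simp add: scal_one)
  qed
  show ?thesis
  proof (intro conjI ballI allI impI)
    fix f show "Phi' N lam f = scal (ss ^ (N - 1)) (Phi N lam (Xi N lam 1 f))" by (rule part1)
  next
    fix v :: "nat \<Rightarrow> nat" and T f
    assume H: "\<forall>i\<in>{1..N}. Xi N lam i f = scal (qq ^ v i * ss powi CT T (rv N v i)) f"
    have "1 \<in> {1..N}" using N by simp
    with H have X1: "Xi N lam 1 f = scal (qq ^ v 1 * ss powi CT T (rv N v 1)) f" by blast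
    have "Phi N lam (scal c f) = scal c (Phi N lam f)" for c
      unfolding Phi_def act_scal_opTinv opx_scal ..
    then have "Phi' N lam f = scal (ss ^ (N - 1) * (qq ^ v 1 * ss powi CT T (rv N v 1))) (Phi N lam f)"
      using part1[of f] X1 by (simp add: scal_scal)
    also have "ss ^ (N - 1) * (qq ^ v 1 * ss powi CT T (rv N v 1)) = ss powi (int N - 1 + CT T (rv N v 1)) * qq ^ v 1"
      unfolding ssN by (simp add: power_int_add)
    finally show "Phi' N lam f = scal (ss powi (int N - 1 + CT T (rv N v 1)) * qq ^ v 1) (Phi N lam f)" .
  qed
qed

end
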